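(* Let $\mathcal{C}=(V,\mathcal{R})$ be a coherent configuration with fibers $X,Y$ such that $m=|X|=|Y|$ is a prime, $r=|\mathcal{R}_X|>2$ and $|\mathcal{R}_{X,Y}|>1$, and let $k=\frac{m-1}{r-1}$. If $(k,m)=(35,71)$ and $1\notin\{d_S\mid S\in\mathcal{R}_{X,Y}\}$, then $\{d_S\mid S\in\mathcal{R}_{X,Y}\}=\{15,21,35\}$.
   Context: A coherent configuration is a pair $\mathcal{C}=(V,\mathcal{R})$ where $V$ is a finite set and $\mathcal{R}$ is a partition of $V\times V$ into nonempty sets such that: (1) the diagonal $\Delta_V$ is a union of members of $\mathcal{R}$; (2) for each $R\in\mathcal{R}$ its transpose $R^t=\{(u,v)\mid (v,u)\in R\}$ belongs to $\mathcal{R}$; (3) for all $R,S,T\in\mathcal{R}$ there is a constant $c_{RS}^T$ with $c_{RS}^T=|R(u)\cap S^t(v)|$ for all $(u,v)\in T$, where $T(w)=\{z\in V\mid (w,z)\in T\}$. A subset $X\subseteq V$ is a fiber if $\Delta_X\in\mathcal{R}$. For fibers $X,Y$, $\mathcal{R}_{X,Y}=\{R\in\mathcal{R}\mid R\subseteq X\times Y\}$, $\mathcal{R}_X=\mathcal{R}_{X,X}$, and for $R\in\mathcal{R}_{X,Y}$, $d_R=c_{RR^t}^{\Delta_X}=|R(x)|$ for any $x\in X$. *)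

theory Defs
  imports Complex_Main "HOL-Computational_Algebra.Primes"
begin

definition out_nbhd :: "('a \<times> 'a) set \<Rightarrow> 'a \<Rightarrow> 'a set" where
  "out_nbhd T w = {z. (w, z) \<in> T}"

definition coherent_configuration :: "'a set \<Rightarrow> ('a \<times> 'a) set set \<Rightarrow> bool" where
  "coherent_configuration V \<R> \<longleftrightarrow>
     finite V \<and>
     (\<forall>S\<in>\<R>. S \<noteq> {}) \<and>
     \<Union>\<R> = V \<times> V \<and>
     (\<forall>S\<in>\<R>. \<forall>T\<in>\<R>. S \<noteq> T \<longrightarrow> S \<inter> T = {}) \<and>
     (\<exists>\<Q>\<subseteq>\<R>. \<Union>\<Q> = Id_on V) \<and>
     (\<forall>S\<in>\<R>. converse S \<in> \<R>) \<and>
     (\<forall>R\<in>\<R>. \<forall>S\<in>\<R>. \<forall>T\<in>\<R>. \<exists>c::nat. \<forall>(u, v)\<in>T.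
        card (out_nbhd R u \<inter> out_nbhd (converse S) v) = c)"

definition fiber :: "('a \<times> 'a) set set \<Rightarrow> 'a set \<Rightarrow> bool" where
  "fiber \<R> X \<longleftrightarrow> Id_on X \<in> \<R>"

definition rels_between :: "('a \<times> 'a) set set \<Rightarrow> 'a set \<Rightarrow> 'a set \<Rightarrow> ('a \<times> 'a) set set" where
  "rels_between \<R> X Y = {S \<in> \<R>. S \<subseteq> X \<times> Y}"

text \<open>Valency d_S = |S(x)| for x in the source fiber; we take x to be some point of
the domain of S (for S in R_{X,Y} this is a point of X, and the value does not
depend on the choice by coherence).\<close>
definition valency :: "('a \<times> 'a) set \<Rightarrow> nat" where
  "valency S = card (out_nbhd S (SOME x. x \<in> Domain S))"

end

theory Submission
  imports Defs "Jordan_Normal_Form.Schur_Decomposition"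
begin



lemma ccD:
  assumes "coherent_configuration V \<R>"
  shows "finite V" "\<forall>S\<in>\<R>. S \<noteq> {}" "\<Union>\<R> = V \<times> V"
    "\<forall>S\<in>\<R>. \<forall>T\<in>\<R>. S \<noteq> T \<longrightarrow> S \<inter> T = {}"
    "\<forall>S\<in>\<R>. converse S \<in> \<R>"
    "\<forall>R\<in>\<R>. \<forall>S\<in>\<R>. \<forall>T\<in>\<R>. \<exists>c::nat. \<forall>(u, v)\<in>T.
        card (out_nbhd R u \<inter> out_nbhd (converse S) v) = c"
  using assms unfolding coherent_configuration_def by simp_all

lemma cc_finite: "coherent_configuration V \<R> \<Longrightarrow> finite V"
  using ccD(1) .
lemma cc_ne: "coherent_configuration V \<R> \<Longrightarrow> S \<in> \<R> \<Longrightarrow> S \<noteq> {}"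
  using ccD(2) by metis
lemma cc_sub: "coherent_configuration V \<R> \<Longrightarrow> S \<in> \<R> \<Longrightarrow> S \<subseteq> V \<times> V"
  using ccD(3) by (metis Union_upper)
lemma cc_cover: "coherent_configuration V \<R> \<Longrightarrow> p \<in> V \<times> V \<Longrightarrow> \<exists>S\<in>\<R>. p \<in> S"
  using ccD(3) by (metis UnionE)
lemma cc_disj: "coherent_configuration V \<R> \<Longrightarrow> S \<in> \<R> \<Longrightarrow> T \<in> \<R> \<Longrightarrow> p \<in> S \<Longrightarrow> p \<in> T \<Longrightarrow> S = T"
  using ccD(4) by (metis disjoint_iff)
lemma cc_conv: "coherent_configuration V \<R> \<Longrightarrow> S \<in> \<R> \<Longrightarrow> converse S \<in> \<R>"
  using ccD(5) by metis
lemma cc_const: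
  assumes "coherent_configuration V \<R>" "R1 \<in> \<R>" "S \<in> \<R>" "T \<in> \<R>" "(u,v) \<in> T" "(u',v') \<in> T"
  shows "card (out_nbhd R1 u \<inter> out_nbhd (converse S) v) = card (out_nbhd R1 u' \<inter> out_nbhd (converse S) v')"
proof -
  from ccD(6)[OF assms(1)] assms(2-4) obtain c :: nat where c: "\<forall>(u, v)\<in>T. card (out_nbhd R1 u \<inter> out_nbhd (converse S) v) = c"
    by blast
  then have "card (out_nbhd R1 u \<inter> out_nbhd (converse S) v) = c" 
    using bspec[OF c assms(5)] by simp
  moreover have "card (out_nbhd R1 u' \<inter> out_nbhd (converse S) v') = c"
    using bspec[OF c assms(6)] by simp
  ultimately show ?thesis by simp
qed

lemma out_conv[simp]: "out_nbhd (converse S) v = {z. (z,v) \<in> S}"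
  by (auto simp: out_nbhd_def)

lemma fiber_sub: "coherent_configuration V \<R> \<Longrightarrow> fiber \<R> X \<Longrightarrow> X \<subseteq> V"
  unfolding fiber_def using cc_sub by (fastforce simp: Id_on_def)

lemma left_closed:
  assumes cc: "coherent_configuration V \<R>" and f: "fiber \<R> X" and S: "S \<in> \<R>"
    and uv: "(u,v) \<in> S" "u \<in> X" and uv': "(u',v') \<in> S"
  shows "u' \<in> X"
proof (rule ccontr)
  assume nu: "u' \<notin> X"
  have I: "Id_on X \<in> \<R>" using f by (simp add: fiber_def)
  have "card (out_nbhd (Id_on X) u \<inter> out_nbhd (converse S) v) = card (out_nbhd (Id_on X) u' \<inter> out_nbhd (converse S) v')"
    by (rule cc_const[OF cc I S S uv(1) uv'])
  moreover have "out_nbhd (Id_on X) u \<inter> out_nbhd (converse S) v = {u}" using uv by (auto simp: out_nbhd_def)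
  moreover have "out_nbhd (Id_on X) u' \<inter> out_nbhd (converse S) v' = {}" using nu by (auto simp: out_nbhd_def)
  ultimately show False by simp
qed

lemma right_closed:
  assumes cc: "coherent_configuration V \<R>" and f: "fiber \<R> Y" and S: "S \<in> \<R>"
    and uv: "(u,v) \<in> S" "v \<in> Y" and uv': "(u',v') \<in> S"
  shows "v' \<in> Y"
proof (rule ccontr)
  assume nv: "v' \<notin> Y"
  have I: "Id_on Y \<in> \<R>" using f by (simp add: fiber_def)
  have "card (out_nbhd S u \<inter> out_nbhd (converse (Id_on Y)) v) = card (out_nbhd S u' \<inter> out_nbhd (converse (Id_on Y)) v')"
    by (rule cc_const[OF cc S I S uv(1) uv'])
  moreover have "out_nbhd S u \<inter> out_nbhd (converse (Id_on Y)) v = {v}" using uv by (auto simp: out_nbhd_def)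
  moreover have "out_nbhd S u' \<inter> out_nbhd (converse (Id_on Y)) v' = {}" using nv by (auto simp: out_nbhd_def)
  ultimately show False by simp
qed

lemma block:
  assumes cc: "coherent_configuration V \<R>" and fX: "fiber \<R> X" and fY: "fiber \<R> Y" and S: "S \<in> \<R>"
    and xy: "(x,y) \<in> S" "x \<in> X" "y \<in> Y"
  shows "S \<subseteq> X \<times> Y"
  using left_closed[OF cc fX S xy(1,2)] right_closed[OF cc fY S xy(1,3)] by auto

lemma rb_cover:
  assumes cc: "coherent_configuration V \<R>" and fX: "fiber \<R> X" and fY: "fiber \<R> Y"
    and "x \<in> X" "y \<in> Y"
  shows "\<exists>S\<in>rels_between \<R> X Y. (x,y) \<in> S"
proof -
  have "(x,y) \<in> V \<times> V" using assms fiber_sub[OF cc fX] fiber_sub[OF cc fY] by auto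
  then obtain S where "S \<in> \<R>" "(x,y) \<in> S" using cc_cover[OF cc] by blast
  moreover have "S \<subseteq> X \<times> Y" by (rule block[OF cc fX fY]) (use \<open>S \<in> \<R>\<close> \<open>(x,y) \<in> S\<close> assms in auto)
  ultimately show ?thesis unfolding rels_between_def by blast
qed

lemma rb_finite:
  assumes cc: "coherent_configuration V \<R>"
  shows "finite (rels_between \<R> X Y)"
proof -
  have "rels_between \<R> X Y \<subseteq> Pow (V \<times> V)" using cc_sub[OF cc] by (auto simp: rels_between_def)
  then show ?thesis using cc_finite[OF cc] by (meson finite_Pow_iff finite_SigmaI finite_subset)
qed

lemma val_eq:
  assumes cc: "coherent_configuration V \<R>" and fX: "fiber \<R> X" and S: "S \<in> \<R>"
    and sub: "S \<subseteq> X \<times> Y" and x: "x \<in> X"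
  shows "card (out_nbhd S x) = valency S"
proof -
  have "Domain S \<noteq> {}" using cc_ne[OF cc S] by auto
  then have "\<exists>z. z \<in> Domain S" by auto
  then have x0: "(SOME z. z \<in> Domain S) \<in> Domain S" by (rule someI_ex)
  define x0 where "x0 = (SOME z. z \<in> Domain S)"
  have x0X: "x0 \<in> X" using x0 sub unfolding x0_def by auto
  have I: "Id_on X \<in> \<R>" using fX by (simp add: fiber_def)
  have "card (out_nbhd S x \<inter> out_nbhd (converse (converse S)) x) = card (out_nbhd S x0 \<inter> out_nbhd (converse (converse S)) x0)"
    by (rule cc_const[OF cc S cc_conv[OF cc S] I]) (use x x0X in auto)
  then have "card (out_nbhd S x) = card (out_nbhd S x0)" by simp
  then show ?thesis unfolding valency_def x0_def by simp
qed

lemma out_sub: "S \<subseteq> X \<times> Y \<Longrightarrow> out_nbhd S x \<subseteq> Y"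
  by (auto simp: out_nbhd_def)

lemma val_pos:
  assumes cc: "coherent_configuration V \<R>" and fX: "fiber \<R> X" and fY: "fiber \<R> Y" and S: "S \<in> \<R>"
    and sub: "S \<subseteq> X \<times> Y"
  shows "valency S \<ge> 1"
proof -
  obtain x y where xy: "(x,y) \<in> S" using cc_ne[OF cc S] by auto
  have fin: "finite Y" using fiber_sub[OF cc fY] cc_finite[OF cc] finite_subset by blast
  have "y \<in> out_nbhd S x" using xy by (simp add: out_nbhd_def)
  then have "card (out_nbhd S x) \<ge> 1" using fin out_sub[OF sub]
    by (metis One_nat_def Suc_leI card_gt_0_iff empty_iff finite_subset)
  with val_eq[OF cc fX S sub] xy sub show ?thesis by auto
qed

lemma sum_val:
  assumes cc: "coherent_configuration V \<R>" and fX: "fiber \<R> X" and fY: "fiber \<R> Y" and x: "x \<in> X"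
  shows "(\<Sum>S\<in>rels_between \<R> X Y. valency S) = card Y"
proof -
  have fin: "finite Y" using fiber_sub[OF cc fY] cc_finite[OF cc] finite_subset by blast
  have U: "(\<Union>S\<in>rels_between \<R> X Y. out_nbhd S x) = Y"
  proof
    show "(\<Union>S\<in>rels_between \<R> X Y. out_nbhd S x) \<subseteq> Y" by (auto simp: rels_between_def out_nbhd_def)
    show "Y \<subseteq> (\<Union>S\<in>rels_between \<R> X Y. out_nbhd S x)"
    proof
      fix y assume y: "y \<in> Y"
      obtain S where S: "S \<in> rels_between \<R> X Y" "(x,y) \<in> S" using rb_cover[OF cc fX fY x y] by blast
      then have "y \<in> out_nbhd S x" by (simp add: out_nbhd_def)
      with S(1) show "y \<in> (\<Union>S\<in>rels_between \<R> X Y. out_nbhd S x)" by blast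
    qed
  qed
  have "card (\<Union>S\<in>rels_between \<R> X Y. out_nbhd S x) = (\<Sum>S\<in>rels_between \<R> X Y. card (out_nbhd S x))"
  proof (rule card_UN_disjoint)
    show "finite (rels_between \<R> X Y)" by (rule rb_finite[OF cc])
    show "\<forall>S\<in>rels_between \<R> X Y. finite (out_nbhd S x)"
    proof
      fix S assume "S \<in> rels_between \<R> X Y"
      then have "out_nbhd S x \<subseteq> Y" by (auto simp: rels_between_def out_nbhd_def)
      then show "finite (out_nbhd S x)" using fin by (rule finite_subset)
    qed
    show "\<forall>S\<in>rels_between \<R> X Y. \<forall>T\<in>rels_between \<R> X Y. S \<noteq> T \<longrightarrow> out_nbhd S x \<inter> out_nbhd T x = {}"
    proof (intro ballI impI)
      fix S T assume S: "S \<in> rels_between \<R> X Y" and T: "T \<in> rels_between \<R> X Y" and ne: "S \<noteq> T"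
      show "out_nbhd S x \<inter> out_nbhd T x = {}"
      proof (rule ccontr)
        assume "out_nbhd S x \<inter> out_nbhd T x \<noteq> {}"
        then obtain y where "(x,y) \<in> S" "(x,y) \<in> T" by (auto simp: out_nbhd_def)
        moreover have "S \<in> \<R>" "T \<in> \<R>" using S T by (auto simp: rels_between_def)
        ultimately have "S = T" using cc_disj[OF cc] by blast
        with ne show False by simp
      qed
    qed
  qed
  then have "card Y = (\<Sum>S\<in>rels_between \<R> X Y. card (out_nbhd S x))" by (simp only: U)
  also have "\<dots> = (\<Sum>S\<in>rels_between \<R> X Y. valency S)"
  proof (rule sum.cong)
    fix S assume "S \<in> rels_between \<R> X Y"
    then have "S \<in> \<R>" "S \<subseteq> X \<times> Y" by (auto simp: rels_between_def)
    then show "card (out_nbhd S x) = valency S" using val_eq[OF cc fX _ _ x] by blast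
  qed simp
  finally show ?thesis by simp
qed

lemma card_rel:
  assumes cc: "coherent_configuration V \<R>" and fX: "fiber \<R> X" and fY: "fiber \<R> Y" and S: "S \<in> \<R>"
    and sub: "S \<subseteq> X \<times> Y"
  shows "card S = card X * valency S"
proof -
  have finX: "finite X" using fiber_sub[OF cc fX] cc_finite[OF cc] finite_subset by blast
  have finY: "finite Y" using fiber_sub[OF cc fY] cc_finite[OF cc] finite_subset by blast
  have "S = Sigma X (out_nbhd S)" using sub by (auto simp: out_nbhd_def)
  then have "card S = (\<Sum>x\<in>X. card (out_nbhd S x))"
    using finX finY out_sub[OF sub] by (metis card_SigmaI finite_subset)
  also have "\<dots> = (\<Sum>x\<in>X. valency S)" using val_eq[OF cc fX S sub] by simp
  finally show ?thesis by simp
qed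

lemma val_conv:
  assumes cc: "coherent_configuration V \<R>" and fX: "fiber \<R> X" and fY: "fiber \<R> Y" and S: "S \<in> \<R>"
    and sub: "S \<subseteq> X \<times> Y" and eq: "card X = card Y" and pos: "card X > 0"
  shows "valency (converse S) = valency S"
proof -
  have "card S = card X * valency S" by (rule card_rel[OF cc fX fY S sub])
  moreover have "card (converse S) = card Y * valency (converse S)"
    by (rule card_rel[OF cc fY fX cc_conv[OF cc S]]) (use sub in auto)
  ultimately show ?thesis using eq pos by (simp add: card_inverse)
qed

lemma dc:
  assumes "finite I" "finite J"
  shows "(\<Sum>i\<in>I. card {j\<in>J. P i j}) = (\<Sum>j\<in>J. card {i\<in>I. P i j})"
proof -
  have c: "\<And>i. card {j\<in>J. P i j} = (\<Sum>j\<in>J. if P i j then 1 else 0)"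
    using assms(2) by (simp add: sum.inter_filter[symmetric])
  have c2: "\<And>j. card {i\<in>I. P i j} = (\<Sum>i\<in>I. if P i j then 1 else 0)"
    using assms(1) by (simp add: sum.inter_filter[symmetric])
  show ?thesis unfolding c c2 by (rule sum.swap)
qed


lemma dvals:
  fixes d :: nat
  assumes "2 \<le> d" "d \<le> 70" "70 dvd d*(d-1)"
  shows "d \<in> {15,21,35,36,50,56,70}"
proof -
  have "list_all (\<lambda>d. 70 dvd d*(d-1) \<longrightarrow> d \<in> {15,21,35,36,50,56,70}) [2..<71]"
    by (simp add: upt_rec dvd_eq_mod_eq_0)
  moreover have "d \<in> set [2..<71]" using assms(1,2) by (subst set_upt) simp
  ultimately show ?thesis using assms(3) unfolding list_all_iff by blast
qed

lemma Dge: "(a::nat) \<in> {15,21,35,36,50,56,70} \<Longrightarrow> 15 \<le> a" by auto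
lemma Dsmall: "(a::nat) \<in> {15,21,35,36,50,56,70} \<Longrightarrow> a \<le> 41 \<Longrightarrow> a \<in> {15,21,35,36}" by auto
lemma Dsmall2: "(a::nat) \<in> {15,21,35,36,50,56,70} \<Longrightarrow> a \<le> 26 \<Longrightarrow> a \<in> {15,21}" by auto

lemma three:
  fixes a b c :: nat
  assumes "a \<in> {15,21,35,36,50,56,70}" "b \<in> {15,21,35,36,50,56,70}" "c \<in> {15,21,35,36,50,56,70}" "a+b+c = 71"
  shows "{a,b,c} = {15,21,35}"
proof -
  have "15 \<le> a" "15 \<le> b" "15 \<le> c" using Dge[OF assms(1)] Dge[OF assms(2)] Dge[OF assms(3)] by simp_all
  then have "a \<le> 41" "b \<le> 41" "c \<le> 41" using assms(4) by linarith+
  then have "a \<in> {15,21,35,36}" "b \<in> {15,21,35,36}" "c \<in> {15,21,35,36}"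
    using Dsmall[OF assms(1)] Dsmall[OF assms(2)] Dsmall[OF assms(3)] by simp_all
  then show ?thesis using assms(4) by auto
qed

lemma four:
  fixes a b c e :: nat
  assumes "a \<in> {15,21,35,36,50,56,70}" "b \<in> {15,21,35,36,50,56,70}" "c \<in> {15,21,35,36,50,56,70}"
   "e \<in> {15,21,35,36,50,56,70}" "a+b+c+e \<le> 71"
  shows "a+b+c+e = 60 \<or> a+b+c+e = 66"
proof -
  have "15 \<le> a" "15 \<le> b" "15 \<le> c" "15 \<le> e" using Dge[OF assms(1)] Dge[OF assms(2)] Dge[OF assms(3)] Dge[OF assms(4)] by simp_all
  then have "a \<le> 26" "b \<le> 26" "c \<le> 26" "e \<le> 26" using assms(5) by linarith+
  then have "a \<in> {15,21}" "b \<in> {15,21}" "c \<in> {15,21}" "e \<in> {15,21}"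
    using Dsmall2[OF assms(1)] Dsmall2[OF assms(2)] Dsmall2[OF assms(3)] Dsmall2[OF assms(4)] by simp_all
  then show ?thesis using assms(5) by auto
qed

locale cfg =
  fixes V :: "'a set" and \<R> X Y A B
  assumes cc: "coherent_configuration V \<R>"
    and fX: "fiber \<R> X" and fY: "fiber \<R> Y"
    and cX: "card X = 71" and cY: "card Y = 71"
    and RX: "rels_between \<R> X X = {Id_on X, A, B}"
    and AB: "A \<noteq> B" and AI: "A \<noteq> Id_on X" and BI: "B \<noteq> Id_on X"
begin

lemma finX: "finite X" using fiber_sub[OF cc fX] cc_finite[OF cc] finite_subset by blast
lemma finY: "finite Y" using fiber_sub[OF cc fY] cc_finite[OF cc] finite_subset by blast
lemma AR: "A \<in> \<R>" "A \<subseteq> X \<times> X" using RX by (auto simp: rels_between_def)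
lemma BR: "B \<in> \<R>" "B \<subseteq> X \<times> X" using RX by (auto simp: rels_between_def)
lemma IR: "Id_on X \<in> \<R>" using fX by (simp add: fiber_def)

lemma AorB: assumes "x \<in> X" "y \<in> X" "x \<noteq> y" shows "(x,y) \<in> A \<or> (x,y) \<in> B"
proof -
  obtain S where "S \<in> rels_between \<R> X X" "(x,y) \<in> S" using rb_cover[OF cc fX fX assms(1,2)] by blast
  with RX assms(3) show ?thesis by auto
qed

lemma notAB: "(x,y) \<in> A \<Longrightarrow> (x,y) \<in> B \<Longrightarrow> False"
  using cc_disj[OF cc AR(1) BR(1)] AB by blast

lemma Airr: "(x,x) \<in> A \<Longrightarrow> False"
proof -
  assume h: "(x,x) \<in> A"
  then have "x \<in> X" using AR(2) by auto
  then have "(x,x) \<in> Id_on X" by auto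
  with h show False using cc_disj[OF cc AR(1) IR] AI by blast
qed

lemma Birr: "(x,x) \<in> B \<Longrightarrow> False"
proof -
  assume h: "(x,x) \<in> B"
  then have "x \<in> X" using BR(2) by auto
  then have "(x,x) \<in> Id_on X" by auto
  with h show False using cc_disj[OF cc BR(1) IR] BI by blast
qed

lemma valI: "valency (Id_on X) = 1"
proof -
  have "X \<noteq> {}" using cX by auto
  then obtain x where x: "x \<in> X" by auto
  have "card (out_nbhd (Id_on X) x) = valency (Id_on X)" by (rule val_eq[OF cc fX IR _ x]) auto
  moreover have "out_nbhd (Id_on X) x = {x}" using x by (auto simp: out_nbhd_def)
  ultimately show ?thesis by simp
qed

lemma kAB: "valency A + valency B = 70"
proof -
  have "X \<noteq> {}" using cX by auto
  then obtain x where x: "x \<in> X" by auto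
  have "(\<Sum>S\<in>rels_between \<R> X X. valency S) = 71" using sum_val[OF cc fX fX x] cX by simp
  then have "valency (Id_on X) + valency A + valency B = 71" using RX AB AI BI by simp
  then show ?thesis using valI by simp
qed

lemma kA1: "valency A \<ge> 1" using val_pos[OF cc fX fX AR] .
lemma kB1: "valency B \<ge> 1" using val_pos[OF cc fX fX BR] .

lemma convA: "converse A = A \<or> converse A = B"
proof -
  have "converse A \<in> rels_between \<R> X X" using cc_conv[OF cc AR(1)] AR(2) by (auto simp: rels_between_def)
  moreover have "converse A \<noteq> Id_on X"
  proof
    assume h: "converse A = Id_on X"
    have "A = converse (converse A)" by simp
    also have "\<dots> = Id_on X" using h by auto
    finally show False using AI by simp
  qed
  ultimately show ?thesis using RX by auto
qed

end


locale cfgn = cfg + assumes AtB: "converse A = B"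
begin

lemma k35: "valency A = 35" "valency B = 35"
proof -
  have "card A = 71 * valency A" using card_rel[OF cc fX fX AR] cX by simp
  moreover have "card B = 71 * valency B" using card_rel[OF cc fX fX BR] cX by simp
  moreover have "card B = card A" using AtB card_inverse by metis
  ultimately have "valency A = valency B" by simp
  then show "valency A = 35" "valency B = 35" using kAB by simp_all
qed

lemma outA: "x \<in> X \<Longrightarrow> card (out_nbhd A x) = 35"
  using val_eq[OF cc fX AR] k35 by simp
lemma outB: "x \<in> X \<Longrightarrow> card (out_nbhd B x) = 35"
  using val_eq[OF cc fX BR] k35 by simp

lemma pconstA:
  assumes S: "S \<in> \<R>" and uv: "(u,v) \<in> A" and uv': "(u',v') \<in> A"
  shows "card (out_nbhd S u \<inter> out_nbhd S v) = card (out_nbhd S u' \<inter> out_nbhd S v')"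
  using cc_const[OF cc S cc_conv[OF cc S] AR(1) uv uv'] by simp

lemma pconst:
  assumes S: "S \<in> \<R>" and x: "x \<in> X" "x' \<in> X" "x \<noteq> x'" and z: "z \<in> X" "z' \<in> X" "z \<noteq> z'"
  shows "card (out_nbhd S x \<inter> out_nbhd S x') = card (out_nbhd S z \<inter> out_nbhd S z')"
proof -
  have h: "\<exists>u v. (u,v) \<in> A \<and> card (out_nbhd S a \<inter> out_nbhd S b) = card (out_nbhd S u \<inter> out_nbhd S v)"
    if "a \<in> X" "b \<in> X" "a \<noteq> b" for a b
  proof (cases "(a,b) \<in> A")
    case True then show ?thesis by blast
  next
    case False
    then have "(a,b) \<in> B" using AorB that by blast
    then have "(b,a) \<in> A" using AtB by auto
    then show ?thesis by (metis Int_commute)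
  qed
  obtain u v where 1: "(u,v) \<in> A" "card (out_nbhd S x \<inter> out_nbhd S x') = card (out_nbhd S u \<inter> out_nbhd S v)"
    using h[OF x] by blast
  obtain u' v' where 2: "(u',v') \<in> A" "card (out_nbhd S z \<inter> out_nbhd S z') = card (out_nbhd S u' \<inter> out_nbhd S v')"
    using h[OF z] by blast
  show ?thesis using 1 2 pconstA[OF S 1(1) 2(1)] by simp
qed

lemma convval:
  assumes S: "S \<in> \<R>" "S \<subseteq> X \<times> Y" and y: "y \<in> Y"
  shows "card {z. (z,y) \<in> S} = valency S"
proof -
  have "card (out_nbhd (converse S) y) = valency (converse S)"
    by (rule val_eq[OF cc fY cc_conv[OF cc S(1)] _ y, of X]) (use S in auto)
  also have "\<dots> = valency S" by (rule val_conv[OF cc fX fY S]) (use cX cY in auto)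
  finally show ?thesis by simp
qed

lemma dd:
  assumes S: "S \<in> \<R>" "S \<subseteq> X \<times> Y" and x: "x \<in> X" "x' \<in> X" "x \<noteq> x'"
  shows "valency S * (valency S - 1) = 70 * card (out_nbhd S x \<inter> out_nbhd S x')"
proof -
  let ?p = "card (out_nbhd S x \<inter> out_nbhd S x')"
  let ?d = "valency S"
  have fI: "finite (X - {x})" using finX by simp
  have "(\<Sum>z\<in>X - {x}. card {y\<in>Y. (x,y) \<in> S \<and> (z,y) \<in> S}) = (\<Sum>y\<in>Y. card {z\<in>X - {x}. (x,y) \<in> S \<and> (z,y) \<in> S})"
    by (rule dc[OF fI finY])
  moreover have "(\<Sum>z\<in>X - {x}. card {y\<in>Y. (x,y) \<in> S \<and> (z,y) \<in> S}) = (\<Sum>z\<in>X - {x}. ?p)"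
  proof (rule sum.cong)
    fix z assume z: "z \<in> X - {x}"
    have "{y\<in>Y. (x,y) \<in> S \<and> (z,y) \<in> S} = out_nbhd S x \<inter> out_nbhd S z"
      using S(2) by (auto simp: out_nbhd_def)
    also have "card \<dots> = ?p" using pconst[OF S(1), of x z x x'] z x by auto
    finally show "card {y\<in>Y. (x,y) \<in> S \<and> (z,y) \<in> S} = ?p" .
  qed simp
  moreover have "(\<Sum>z\<in>X - {x}. ?p) = 70 * ?p" using cX x finX by simp
  moreover have "(\<Sum>y\<in>Y. card {z\<in>X - {x}. (x,y) \<in> S \<and> (z,y) \<in> S}) = (\<Sum>y\<in>Y. if (x,y) \<in> S then ?d - 1 else 0)"
  proof (rule sum.cong)
    fix y assume y: "y \<in> Y"
    show "card {z\<in>X - {x}. (x,y) \<in> S \<and> (z,y) \<in> S} = (if (x,y) \<in> S then ?d - 1 else 0)"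
    proof (cases "(x,y) \<in> S")
      case True
      have "{z\<in>X - {x}. (x,y) \<in> S \<and> (z,y) \<in> S} = {z. (z,y) \<in> S} - {x}"
        using True S(2) by auto
      moreover have "card {z. (z,y) \<in> S} = ?d" by (rule convval[OF S y])
      moreover have "x \<in> {z. (z,y) \<in> S}" using True by simp
      moreover have "finite {z. (z,y) \<in> S}" using S(2) finX by (auto intro: finite_subset)
      ultimately show ?thesis using True by simp
    qed simp
  qed simp
  moreover have "(\<Sum>y\<in>Y. if (x,y) \<in> S then ?d - 1 else 0) = (\<Sum>y\<in>{y\<in>Y. (x,y) \<in> S}. ?d - 1)"
    using sum.inter_filter[OF finY, of "\<lambda>_. ?d - 1" "\<lambda>y. (x,y) \<in> S"] by simp
  moreover have "{y\<in>Y. (x,y) \<in> S} = out_nbhd S x" using S(2) by (auto simp: out_nbhd_def)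
  moreover have "card (out_nbhd S x) = ?d" by (rule val_eq[OF cc fX S x(1)])
  ultimately show ?thesis by (simp add: mult.commute)
qed


lemma two_false:
  assumes RXY: "rels_between \<R> X Y = {S,T}" and ST: "S \<noteq> T"
  shows False
proof -
  have S: "S \<in> \<R>" "S \<subseteq> X \<times> Y" and T: "T \<in> \<R>" "T \<subseteq> X \<times> Y"
    using RXY by (auto simp: rels_between_def)
  define d where "d = valency S"
  obtain x0 where x0: "x0 \<in> X" using cX by (metis card.empty ex_in_conv zero_neq_numeral)
  have "valency S + valency T = 71"
    using sum_val[OF cc fX fY x0] RXY ST cY by simp
  moreover have "valency T \<ge> 1" using val_pos[OF cc fX fY T] .
  ultimately have d70: "d \<le> 70" unfolding d_def by simp
  have "card (out_nbhd A x0) = 35" using outA[OF x0] .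
  then obtain x1 where x1: "x1 \<in> out_nbhd A x0" by (metis card.empty ex_in_conv zero_neq_numeral)
  have "card (out_nbhd B x0) = 35" using outB[OF x0] .
  then obtain x2 where x2: "x2 \<in> out_nbhd B x0" by (metis card.empty ex_in_conv zero_neq_numeral)
  have x1X: "x1 \<in> X" "x1 \<noteq> x0" using x1 AR(2) Airr by (auto simp: out_nbhd_def)
  have x2X: "x2 \<in> X" "x2 \<noteq> x0" "x2 \<notin> out_nbhd A x0" using x2 BR(2) Birr notAB by (auto simp: out_nbhd_def)
  define p where "p = card (out_nbhd S x0 \<inter> out_nbhd S x1)"
  have pc: "card (out_nbhd S z \<inter> out_nbhd S z') = p" if "z \<in> X" "z' \<in> X" "z \<noteq> z'" for z z'
    unfolding p_def using pconst[OF S(1) that x0 x1X(1)] x1X(2) by auto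
  obtain sa sb where sab: "(sa,sb) \<in> S" using cc_ne[OF cc S(1)] by auto
  obtain ta tb where tab: "(ta,tb) \<in> T" using cc_ne[OF cc T(1)] by auto
  define \<alpha> where "\<alpha> = card (out_nbhd A sa \<inter> {z. (z,sb) \<in> S})"
  define \<beta> where "\<beta> = card (out_nbhd A ta \<inter> {z. (z,tb) \<in> S})"
  have al: "card (out_nbhd A x \<inter> {z. (z,y) \<in> S}) = \<alpha>" if "(x,y) \<in> S" for x y
    unfolding \<alpha>_def using cc_const[OF cc AR(1) S(1) S(1) that sab] by simp
  have be: "card (out_nbhd A x \<inter> {z. (z,y) \<in> S}) = \<beta>" if "(x,y) \<in> T" for x y
    unfolding \<beta>_def using cc_const[OF cc AR(1) S(1) T(1) that tab] by simp
  have finA: "finite (out_nbhd A x0)" using AR(2) finX by (auto simp: out_nbhd_def intro: finite_subset)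
  have cardSx: "card (out_nbhd S x) = d" if "x \<in> X" for x using val_eq[OF cc fX S that] d_def by simp
  have finS: "finite (out_nbhd S x)" for x using S(2) finY by (auto simp: out_nbhd_def intro: finite_subset)
  have E: "(\<Sum>z\<in>out_nbhd A x0. if z = x' then d else p) = \<alpha> * p + \<beta> * (d - p)"
    if x': "x' \<in> X" "x' \<noteq> x0" for x'
  proof -
    have "(\<Sum>z\<in>out_nbhd A x0. card {y\<in>Y. (z,y) \<in> S \<and> (x',y) \<in> S}) = (\<Sum>y\<in>Y. card {z\<in>out_nbhd A x0. (z,y) \<in> S \<and> (x',y) \<in> S})"
      by (rule dc[OF finA finY])
    moreover have "(\<Sum>z\<in>out_nbhd A x0. card {y\<in>Y. (z,y) \<in> S \<and> (x',y) \<in> S}) = (\<Sum>z\<in>out_nbhd A x0. if z = x' then d else p)"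
    proof (rule sum.cong)
      fix z assume z: "z \<in> out_nbhd A x0"
      then have zX: "z \<in> X" using AR(2) by (auto simp: out_nbhd_def)
      have eq: "{y\<in>Y. (z,y) \<in> S \<and> (x',y) \<in> S} = out_nbhd S z \<inter> out_nbhd S x'" using S(2) by (auto simp: out_nbhd_def)
      show "card {y\<in>Y. (z,y) \<in> S \<and> (x',y) \<in> S} = (if z = x' then d else p)"
        unfolding eq using pc[OF zX x'(1)] cardSx[OF x'(1)] by auto
    qed simp
    moreover have "(\<Sum>y\<in>Y. card {z\<in>out_nbhd A x0. (z,y) \<in> S \<and> (x',y) \<in> S})
        = (\<Sum>y\<in>Y. if y \<in> out_nbhd S x' then (if y \<in> out_nbhd S x0 then \<alpha> else \<beta>) else 0)"
    proof (rule sum.cong)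
      fix y assume y: "y \<in> Y"
      show "card {z\<in>out_nbhd A x0. (z,y) \<in> S \<and> (x',y) \<in> S} = (if y \<in> out_nbhd S x' then (if y \<in> out_nbhd S x0 then \<alpha> else \<beta>) else 0)"
      proof (cases "(x',y) \<in> S")
        case True
        have eq: "{z\<in>out_nbhd A x0. (z,y) \<in> S \<and> (x',y) \<in> S} = out_nbhd A x0 \<inter> {z. (z,y) \<in> S}" using True by auto
        show ?thesis
        proof (cases "(x0,y) \<in> S")
          case True2: True
          then show ?thesis unfolding eq using al[OF True2] True by (simp add: out_nbhd_def)
        next
          case False2: False
          obtain R' where "R' \<in> rels_between \<R> X Y" "(x0,y) \<in> R'" using rb_cover[OF cc fX fY x0 y] by blast
          then have "(x0,y) \<in> T" using RXY False2 by auto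
          then show ?thesis unfolding eq using be True False2 by (simp add: out_nbhd_def)
        qed
      next
        case False then show ?thesis by (simp add: out_nbhd_def)
      qed
    qed simp
    moreover have "(\<Sum>y\<in>Y. if y \<in> out_nbhd S x' then (if y \<in> out_nbhd S x0 then \<alpha> else \<beta>) else 0)
        = (\<Sum>y\<in>out_nbhd S x'. (if y \<in> out_nbhd S x0 then \<alpha> else \<beta>))"
    proof -
      have "{y\<in>Y. y \<in> out_nbhd S x'} = out_nbhd S x'" using S(2) by (auto simp: out_nbhd_def)
      then show ?thesis using sum.inter_filter[OF finY, of "\<lambda>y. if y \<in> out_nbhd S x0 then \<alpha> else \<beta>" "\<lambda>y. y \<in> out_nbhd S x'"]
        by simp
    qed
    moreover have "(\<Sum>y\<in>out_nbhd S x'. (if y \<in> out_nbhd S x0 then \<alpha> else \<beta>))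
        = \<alpha> * card (out_nbhd S x' \<inter> out_nbhd S x0) + \<beta> * card (out_nbhd S x' - out_nbhd S x0)"
      using sum.If_cases[OF finS, of "\<lambda>y. y \<in> out_nbhd S x0" "\<lambda>_. \<alpha>" "\<lambda>_. \<beta>" x']
      by (simp add: Diff_eq)
    moreover have "card (out_nbhd S x' \<inter> out_nbhd S x0) = p" using pc[OF x'(1) x0 x'(2)] .
    moreover have "card (out_nbhd S x' - out_nbhd S x0) = d - p"
      using card_Diff_subset_Int[of "out_nbhd S x'" "out_nbhd S x0"] finS cardSx[OF x'(1)]
        pc[OF x'(1) x0 x'(2)] by simp
    ultimately show ?thesis by simp
  qed
  have s1: "(\<Sum>z\<in>out_nbhd A x0 - {x1}. if z = x1 then d else p) = 34 * p"
  proof -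
    have "(\<Sum>z\<in>out_nbhd A x0 - {x1}. if z = x1 then d else p) = (\<Sum>z\<in>out_nbhd A x0 - {x1}. p)"
      by (rule sum.cong) auto
    also have "\<dots> = 34 * p" using outA[OF x0] x1 finA by simp
    finally show ?thesis .
  qed
  have "(\<Sum>z\<in>out_nbhd A x0. if z = x1 then d else p) = (if x1 = x1 then d else p) + (\<Sum>z\<in>out_nbhd A x0 - {x1}. if z = x1 then d else p)"
    by (rule sum.remove[OF finA x1])
  also have "\<dots> = d + 34 * p" using s1 by simp
  finally have E1: "\<alpha> * p + \<beta> * (d - p) = d + 34 * p" using E[OF x1X] by simp
  have "(\<Sum>z\<in>out_nbhd A x0. if z = x2 then d else p) = (\<Sum>z\<in>out_nbhd A x0. p)"
    by (rule sum.cong) (use x2X(3) in auto)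
  also have "\<dots> = 35 * p" using outA[OF x0] by simp
  finally have E2: "\<alpha> * p + \<beta> * (d - p) = 35 * p" using E[OF x2X(1,2)] by simp
  from E1 E2 have dp: "d = p" by simp
  have "d \<ge> 1" using val_pos[OF cc fX fY S] d_def by simp
  then obtain y0 where y0: "y0 \<in> out_nbhd S x0" using cardSx[OF x0] by (metis card.empty ex_in_conv not_one_le_zero)
  have y0Y: "y0 \<in> Y" using y0 S(2) by (auto simp: out_nbhd_def)
  have "X \<subseteq> {z. (z,y0) \<in> S}"
  proof
    fix x' assume x': "x' \<in> X"
    show "x' \<in> {z. (z,y0) \<in> S}"
    proof (cases "x' = x0")
      case True then show ?thesis using y0 by (simp add: out_nbhd_def)
    next
      case False
      have "out_nbhd S x0 \<inter> out_nbhd S x' = out_nbhd S x0"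
        using card_subset_eq[OF finS, of "out_nbhd S x0 \<inter> out_nbhd S x'"] pc[OF x0 x' False[symmetric]]
          cardSx[OF x0] dp by auto
      then show ?thesis using y0 by (auto simp: out_nbhd_def)
    qed
  qed
  moreover have "finite {z. (z,y0) \<in> S}" using S(2) finX by (auto intro: finite_subset)
  ultimately have "card X \<le> card {z. (z,y0) \<in> S}" by (rule card_mono[rotated])
  also have "\<dots> = d" using convval[OF S y0Y] d_def by simp
  finally show False using cX d70 by simp
qed


lemma nonsym_result:
  assumes XYgt: "card (rels_between \<R> X Y) > 1" and no1: "1 \<notin> valency ` rels_between \<R> X Y"
  shows "valency ` rels_between \<R> X Y = {15,21,35}"
proof -
  define F where "F = rels_between \<R> X Y"
  have finF: "finite F" unfolding F_def by (rule rb_finite[OF cc])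
  obtain x0 where x0: "x0 \<in> X" using cX by (metis card.empty ex_in_conv zero_neq_numeral)
  have sum71: "(\<Sum>S\<in>F. valency S) = 71" unfolding F_def using sum_val[OF cc fX fY x0] cY by simp
  have "card (out_nbhd A x0) = 35" using outA[OF x0] .
  then obtain x1 where x1: "x1 \<in> out_nbhd A x0" by (metis card.empty ex_in_conv zero_neq_numeral)
  have x1X: "x1 \<in> X" "x0 \<noteq> x1" using x1 AR(2) Airr by (auto simp: out_nbhd_def)
  have DS: "valency S \<in> {15,21,35,36,50,56,70}" if SF: "S \<in> F" for S
  proof -
    have S: "S \<in> \<R>" "S \<subseteq> X \<times> Y" using SF unfolding F_def by (auto simp: rels_between_def)
    have "valency S \<ge> 1" by (rule val_pos[OF cc fX fY S])
    moreover have "valency S \<noteq> 1" using no1 SF unfolding F_def by force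
    ultimately have d2: "2 \<le> valency S" by simp
    have "card (F - {S}) > 0" using XYgt SF finF unfolding F_def[symmetric] by simp
    then obtain T where T: "T \<in> F - {S}" by (metis card.empty ex_in_conv less_irrefl)
    have "valency T \<ge> 1" using T val_pos[OF cc fX fY] unfolding F_def by (auto simp: rels_between_def)
    moreover have "valency T \<le> (\<Sum>S\<in>F - {S}. valency S)" by (rule member_le_sum[OF T]) (use finF in auto)
    moreover have "(\<Sum>S\<in>F. valency S) = valency S + (\<Sum>S\<in>F - {S}. valency S)" by (rule sum.remove[OF finF SF])
    ultimately have d70: "valency S \<le> 70" using sum71 by simp
    have "valency S * (valency S - 1) = 70 * card (out_nbhd S x0 \<inter> out_nbhd S x1)"
      by (rule dd[OF S x0 x1X(1) x1X(2)])
    then have "70 dvd valency S * (valency S - 1)" by simp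
    then show ?thesis using dvals d2 d70 by blast
  qed
  have n2: "card F \<noteq> 2"
  proof
    assume "card F = 2"
    then obtain S T where "F = {S,T}" "S \<noteq> T" by (auto simp: card_2_iff)
    then show False using two_false unfolding F_def by blast
  qed
  then have "3 \<le> card F" using XYgt unfolding F_def[symmetric] by simp
  then obtain G where G: "G \<subseteq> F" "card G = 3" "finite G" by (rule obtain_subset_with_card_n)
  then obtain S1 S2 S3 where G3: "G = {S1,S2,S3}" "S1 \<noteq> S2" "S2 \<noteq> S3" "S1 \<noteq> S3" by (auto simp: card_3_iff)
  define Rst where "Rst = F - G"
  have FG: "F = G \<union> Rst" "G \<inter> Rst = {}" using G(1) unfolding Rst_def by auto
  have finR: "finite Rst" using finF unfolding Rst_def by simp
  have sG: "(\<Sum>S\<in>G. valency S) = valency S1 + valency S2 + valency S3" using G3 by simp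
  have tot: "valency S1 + valency S2 + valency S3 + (\<Sum>S\<in>Rst. valency S) = 71"
    using sum71 sum.union_disjoint[OF G(3) finR FG(2), of valency] FG(1) sG by simp
  have inF: "S1 \<in> F" "S2 \<in> F" "S3 \<in> F" using G G3 by auto
  have D1: "valency S1 \<in> {15,21,35,36,50,56,70}" "valency S2 \<in> {15,21,35,36,50,56,70}"
    "valency S3 \<in> {15,21,35,36,50,56,70}" using DS inF by auto
  show ?thesis
  proof (cases "Rst = {}")
    case True
    then have "F = {S1,S2,S3}" using FG G3 by simp
    moreover have "{valency S1, valency S2, valency S3} = {15,21,35}"
      by (rule three[OF D1]) (use tot True in simp)
    ultimately show ?thesis unfolding F_def[symmetric] by simp
  next
    case False
    then obtain S4 where S4: "S4 \<in> Rst" by auto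
    have "S4 \<in> F" using S4 unfolding Rst_def by auto
    then have D4: "valency S4 \<in> {15,21,35,36,50,56,70}" by (rule DS)
    have r4: "(\<Sum>S\<in>Rst. valency S) = valency S4 + (\<Sum>S\<in>Rst - {S4}. valency S)" by (rule sum.remove[OF finR S4])
    have "valency S1 + valency S2 + valency S3 + valency S4 \<le> 71" using tot r4 by simp
    then have f: "valency S1 + valency S2 + valency S3 + valency S4 = 60 \<or> valency S1 + valency S2 + valency S3 + valency S4 = 66"
      by (rule four[OF D1 D4])
    then have pos: "(\<Sum>S\<in>Rst - {S4}. valency S) > 0" and le: "(\<Sum>S\<in>Rst - {S4}. valency S) \<le> 11"
      using tot r4 by auto
    then obtain S5 where S5: "S5 \<in> Rst - {S4}" by (metis empty_iff sum.empty less_irrefl subsetI subset_empty)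
    have "S5 \<in> F" using S5 unfolding Rst_def by auto
    then have "valency S5 \<in> {15,21,35,36,50,56,70}" by (rule DS)
    then have "15 \<le> valency S5" by (rule Dge)
    moreover have "valency S5 \<le> (\<Sum>S\<in>Rst - {S4}. valency S)" by (rule member_le_sum[OF S5]) (use finR in auto)
    ultimately show ?thesis using le by simp
  qed
qed

end



lemma trace_comm:
  fixes A B :: "'a::comm_ring_1 mat"
  assumes A: "A \<in> carrier_mat n n" and B: "B \<in> carrier_mat n n"
  shows "(\<Sum>i<n. (A*B)$$(i,i)) = (\<Sum>i<n. (B*A)$$(i,i))"
proof -
  have "(\<Sum>i<n. (A*B)$$(i,i)) = (\<Sum>i<n. \<Sum>j<n. A$$(i,j) * B$$(j,i))"
    using A B by (auto simp: scalar_prod_def lessThan_atLeast0 intro!: sum.cong)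
  also have "\<dots> = (\<Sum>j<n. \<Sum>i<n. B$$(j,i) * A$$(i,j))"
    by (subst sum.swap) (simp add: mult.commute)
  also have "\<dots> = (\<Sum>i<n. (B*A)$$(i,i))"
    using A B by (auto simp: scalar_prod_def lessThan_atLeast0 intro!: sum.cong)
  finally show ?thesis .
qed

lemma count_two:
  assumes "\<forall>e\<in>set es. e = a \<or> e = (b::'a::comm_ring_1)"
  shows "sum_list es = of_nat (length (filter (\<lambda>e. e = a) es)) * a
     + of_nat (length es - length (filter (\<lambda>e. e = a) es)) * b"
  using assms
proof (induction es)
  case Nil then show ?case by simp
next
  case (Cons x xs)
  have le: "length (filter (\<lambda>e. e = a) xs) \<le> length xs" by simp
  show ?case
  proof (cases "x = a")
    case True then show ?thesis using Cons le by (simp add: algebra_simps)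
  next
    case False
    then have "x = b" using Cons by auto
    then show ?thesis using Cons le False by (simp add: Suc_diff_le algebra_simps)
  qed
qed

lemma eig_quad:
  fixes N :: "complex mat"
  assumes N: "N \<in> carrier_mat n n" and NN: "N * N = s \<cdot>\<^sub>m N + t \<cdot>\<^sub>m 1\<^sub>m n"
    and ev: "eigenvalue N e"
  shows "e * e = s * e + t"
proof -
  obtain v where v: "v \<in> carrier_vec n" "v \<noteq> 0\<^sub>v n" "N *\<^sub>v v = e \<cdot>\<^sub>v v"
    using ev N unfolding eigenvalue_def eigenvector_def by auto
  have "N *\<^sub>v (N *\<^sub>v v) = (N * N) *\<^sub>v v" using N v by (simp add: assoc_mult_mat_vec)
  also have "\<dots> = (s \<cdot>\<^sub>m N + t \<cdot>\<^sub>m 1\<^sub>m n) *\<^sub>v v" using NN by simp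
  also have "\<dots> = (s \<cdot>\<^sub>m N) *\<^sub>v v + (t \<cdot>\<^sub>m 1\<^sub>m n) *\<^sub>v v"
    by (rule add_mult_distrib_mat_vec) (use N v in auto)
  also have "(s \<cdot>\<^sub>m N) *\<^sub>v v = s \<cdot>\<^sub>v (N *\<^sub>v v)" by (rule eq_vecI) (use N v(1) in auto)
  also have "(t \<cdot>\<^sub>m 1\<^sub>m n) *\<^sub>v v = t \<cdot>\<^sub>v v" by (rule eq_vecI) (use N v(1) in auto)
  finally have 1: "N *\<^sub>v (N *\<^sub>v v) = s \<cdot>\<^sub>v (N *\<^sub>v v) + t \<cdot>\<^sub>v v" .
  have "N *\<^sub>v (N *\<^sub>v v) = (e*e) \<cdot>\<^sub>v v" using N v by (simp add: mult_mat_vec smult_smult_assoc)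
  with 1 v have eq: "(e*e) \<cdot>\<^sub>v v = (s*e + t) \<cdot>\<^sub>v v"
    by (simp add: add_smult_distrib_vec smult_smult_assoc)
  obtain i where i: "i < n" "v $ i \<noteq> 0" using v
    by (metis carrier_vecD eq_vecI index_zero_vec(1) index_zero_vec(2))
  from arg_cong[OF eq, of "\<lambda>x. x $ i"] i v have "e*e * v$i = (s*e+t) * v$i" by simp
  with i show ?thesis by simp
qed

lemma spec:
  fixes N :: "complex mat"
  assumes N: "N \<in> carrier_mat n n" and NN: "N * N = s \<cdot>\<^sub>m N + t \<cdot>\<^sub>m 1\<^sub>m n"
    and w: "w \<in> carrier_vec n" "w \<noteq> 0\<^sub>v n" "N *\<^sub>v w = u \<cdot>\<^sub>v w"
    and uq: "u*u = s*u + t"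
  shows "\<exists>b. 1 \<le> b \<and> b \<le> n \<and> (\<Sum>i<n. N$$(i,i)) = of_nat b * u + of_nat (n - b) * (s - u)"
proof -
  obtain es where cp: "char_poly N = (\<Prod>a\<leftarrow>es. [:- a, 1:])" and len: "length es = n"
    using char_poly_factorized[OF N] by auto
  obtain B P Q where sd: "schur_decomposition N es = (B,P,Q)" by (metis prod_cases3)
  from schur_decomposition[OF N cp sd] have sim: "similar_mat_wit N B P Q" and dg: "diag_mat B = es"
    by auto
  from sim N have Bc: "B \<in> carrier_mat n n" and Pc: "P \<in> carrier_mat n n" and Qc: "Q \<in> carrier_mat n n"
    and QP: "Q * P = 1\<^sub>m n" and NPBQ: "N = P * B * Q"
    unfolding similar_mat_wit_def Let_def by auto
  have "(\<Sum>i<n. N$$(i,i)) = (\<Sum>i<n. (P * B * Q)$$(i,i))" using NPBQ by simp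
  also have "\<dots> = (\<Sum>i<n. (Q * (P * B))$$(i,i))"
    using Pc Bc Qc by (intro trace_comm) auto
  also have "Q * (P * B) = (Q * P) * B" using Pc Bc Qc by (simp add: assoc_mult_mat)
  also have "\<dots> = B" using QP Bc by simp
  also have "(\<Sum>i<n. B$$(i,i)) = sum_list es"
  proof -
    have "sum_list es = sum_list (map (\<lambda>i. B$$(i,i)) [0..<n])" using dg Bc by (auto simp: diag_mat_def)
    also have "\<dots> = (\<Sum>i<n. B$$(i,i))" by (simp add: sum_list_map_eq_sum_count lessThan_atLeast0 sum.list_conv_set_nth)
    finally show ?thesis by simp
  qed
  finally have tr: "(\<Sum>i<n. N$$(i,i)) = sum_list es" .
  have roots: "\<And>e. eigenvalue N e \<longleftrightarrow> e \<in> set es"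
    using eigenvalue_root_char_poly[OF N] cp by (auto simp: poly_prod_list prod_list_zero_iff)
  have two: "\<forall>e\<in>set es. e = u \<or> e = s - u"
  proof
    fix e assume "e \<in> set es"
    then have "e * e = s * e + t" using eig_quad[OF N NN] roots by auto
    then have "(e - u) * (e - (s - u)) = 0" using uq by (simp add: algebra_simps)
    then show "e = u \<or> e = s - u" by auto
  qed
  have "eigenvalue N u" using w N unfolding eigenvalue_def eigenvector_def by auto
  then have uin: "u \<in> set es" using roots by auto
  let ?b = "length (filter (\<lambda>e. e = u) es)"
  have "1 \<le> ?b" using uin by (simp add: Suc_le_eq filter_empty_conv length_greater_0_conv) 
  moreover have "?b \<le> n" using len by (metis length_filter_le)
  ultimately show ?thesis using tr count_two[OF two] len by auto
qed



lemma dv71: fixes x :: int assumes "71 dvd x" "0 \<le> x" "x \<le> 138" shows "x = 0 \<or> x = 71"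
proof -
  obtain q where q: "x = 71 * q" using assms(1) by (auto elim: dvdE)
  then have "0 \<le> q" "q \<le> 1" using assms(2,3) by linarith+
  then have "q = 0 \<or> q = 1" by linarith
  then show ?thesis using q by auto
qed

lemma p71div: fixes a b :: int assumes p: "prime (71::int)" and "a * b = 71" "1 \<le> a" "2 \<le> b" "b \<le> 70" shows False
proof -
  have "b dvd 71" using assms(2) by (metis dvd_triv_right)
  moreover have "b \<ge> 0" using assms by simp
  ultimately have "b = 1 \<or> b = 71" using p unfolding prime_int_iff by blast
  then show False using assms by simp
qed

lemma int_contra:
  fixes r k lam mu f c :: int
  assumes p: "prime (71::int)"
    and k: "1 \<le> k" "k \<le> 69" and lm: "0 \<le> lam" "lam \<le> k" "0 \<le> mu" "mu \<le> k"
    and fc: "0 \<le> f" "0 \<le> c" "f + c = 70"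
    and id: "k*k = k + k*lam + (70-k)*mu"
    and q: "r*r = (lam - mu)*r + (k - mu)"
    and tr: "f*r + c*((lam-mu) - r) = -k"
  shows False
proof -
  define s where "s = lam - mu"
  define r' where "r' = s - r"
  have rr': "r*r' = mu - k" using q by (simp add: r'_def s_def algebra_simps)
  have sm: "r + r' = s" by (simp add: r'_def)
  have tr': "f*r + c*r' = -k" using tr by (simp add: r'_def s_def)
  have "(k - r)*(k - r') = k*k - k*(r + r') + r*r'" by (simp add: algebra_simps)
  also have "\<dots> = k*k - k*s + (mu - k)" using sm rr' by simp
  also have "\<dots> = 71*mu" using id by (simp add: s_def algebra_simps)
  finally have prod: "(k - r)*(k - r') = 71*mu" .
  have sb: "-k \<le> s" "s \<le> k" using lm by (simp_all add: s_def)
  have absr: "\<bar>r\<bar> \<le> k"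
  proof (cases "r' = 0")
    case True then show ?thesis using sm sb by auto
  next
    case False
    then have "\<bar>r\<bar> * 1 \<le> \<bar>r\<bar> * \<bar>r'\<bar>" by (intro mult_left_mono) auto
    also have "\<dots> = \<bar>mu - k\<bar>" by (metis abs_mult rr')
    finally show ?thesis using lm by simp
  qed
  have absr': "\<bar>r'\<bar> \<le> k"
  proof (cases "r = 0")
    case True then show ?thesis using sm sb by auto
  next
    case False
    then have "\<bar>r'\<bar> * 1 \<le> \<bar>r'\<bar> * \<bar>r\<bar>" by (intro mult_left_mono) auto
    also have "\<dots> = \<bar>mu - k\<bar>" by (metis abs_mult rr' mult.commute)
    finally show ?thesis using lm by simp
  qed
  have "71 dvd (k - r)*(k - r')" using prod by simp
  then have "71 dvd (k - r) \<or> 71 dvd (k - r')" using p prime_dvd_mult_iff by blast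
  then have cases: "k - r = 0 \<or> k - r = 71 \<or> k - r' = 0 \<or> k - r' = 71"
    using dv71[of "k - r"] dv71[of "k - r'"] absr absr' k by fastforce
  show False
  proof -
    { assume a: "k - r = 0"
      then have "mu = 0" using prod by simp
      then have "k * (r' + 1) = 0" using rr' a by (simp add: algebra_simps)
      then have "r' = -1" using k by simp
      then have "(f+1)*(k+1) = 71" using tr' a fc by (simp add: algebra_simps)
      then have False using p71div[OF p, of "f+1" "k+1"] fc k by simp }
    moreover
    { assume a: "k - r' = 0"
      then have "mu = 0" using prod by simp
      then have "k * (r + 1) = 0" using rr' a by (simp add: algebra_simps)
      then have "r = -1" using k by simp
      then have "(c+1)*(k+1) = 71" using tr' a fc by (simp add: algebra_simps)
      then have False using p71div[OF p, of "c+1" "k+1"] fc k by simp }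
    moreover
    { assume a: "k - r = 71"
      then have "mu = k - r'" using prod by simp
      then have "r' * (r + 1) = 0" using rr' by (simp add: algebra_simps)
      moreover have "r + 1 \<noteq> 0" using a k by simp
      ultimately have "r' = 0" by simp
      then have "k * (f+1) = 71 * f" using tr' a by (simp add: algebra_simps)
      then have "71 dvd k * (f+1)" by simp
      then have "71 dvd k \<or> 71 dvd (f+1)" using p prime_dvd_mult_iff by blast
      moreover have "\<not> 71 dvd k" using dv71[of k] k by auto
      ultimately have "71 dvd (f+1)" by simp
      then have "f + 1 = 71" using dv71[of "f+1"] fc by simp
      then have False using \<open>k * (f+1) = 71 * f\<close> k by simp }
    moreover
    { assume a: "k - r' = 71"
      then have "mu = k - r" using prod by simp
      then have "r * (r' + 1) = 0" using rr' by (simp add: algebra_simps)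
      moreover have "r' + 1 \<noteq> 0" using a k by simp
      ultimately have "r = 0" by simp
      then have "k * (c+1) = 71 * c" using tr' a by (simp add: algebra_simps)
      then have "71 dvd k * (c+1)" by simp
      then have "71 dvd k \<or> 71 dvd (c+1)" using p prime_dvd_mult_iff by blast
      moreover have "\<not> 71 dvd k" using dv71[of k] k by auto
      ultimately have "71 dvd (c+1)" by simp
      then have "c + 1 = 71" using dv71[of "c+1"] fc by simp
      then have False using \<open>k * (c+1) = 71 * c\<close> k by simp }
    ultimately show False using cases by blast
  qed
qed

lemma ratint:
  fixes P q s t :: int
  assumes q: "q \<noteq> 0" and eq: "P*P = s*P*q + t*q*q"
  shows "q dvd P"
proof -
  have g: "gcd P q \<noteq> 0" using q by simp
  obtain P' q' where d: "P = P' * gcd P q" "q = q' * gcd P q" "coprime P' q'"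
    using gcd_coprime_exists[OF g] by blast
  define g' where "g' = gcd P q"
  have "g' * g' * (P'*P') = g' * g' * (s*P'*q' + t*q'*q')"
    using eq d unfolding g'_def[symmetric] by (simp add: algebra_simps)
  then have "P'*P' = s*P'*q' + t*q'*q'" using g q unfolding g'_def by simp
  then have "q' dvd P' * P'" by (metis dvd_add dvd_triv_right mult.assoc mult.commute)
  then have "q' dvd P'" using d(3) by (simp add: coprime_commute coprime_dvd_mult_left_iff)
  then show ?thesis using d by (metis mult_dvd_mono dvd_refl)
qed


lemma complex_contra:
  fixes u :: complex and k lam mu f c :: nat
  assumes p: "prime (71::int)" and k: "1 \<le> k" "k \<le> 69" and lm: "lam \<le> k" "mu \<le> k" and fc: "f + c = 70"
    and id: "k*k = k + k*lam + (70-k)*mu"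
    and uq: "u*u = (of_nat lam - of_nat mu)*u + (of_nat k - of_nat mu)"
    and tr: "of_nat f * u + of_nat c * ((of_nat lam - of_nat mu) - u) = - of_nat k"
  shows False
proof (cases "f = c")
  case True
  then have f35: "f = 35" "c = 35" using fc by auto
  have "(of_nat (35*lam + k) :: complex) = of_nat (35*mu)"
    using tr f35 by (simp add: algebra_simps)
  then have e: "35*lam + k = 35*mu" by (simp only: of_nat_eq_iff)
  then have "k = 35*(mu - lam)" by (simp add: diff_mult_distrib2)
  moreover have "1 \<le> mu - lam" "mu - lam \<le> 1" using k calculation by linarith+
  ultimately have "k = 35" "mu = lam + 1" using e by linarith+
  then have "2 * lam = 33" using id by simp
  then show False by presburger
next
  case False
  define q where "q = int f - int c"
  define P where "P = -(int k + int c * (int lam - int mu))"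
  define s where "s = int lam - int mu"
  define t where "t = int k - int mu"
  have q0: "q \<noteq> 0" using False unfolding q_def by simp
  have uP: "u * of_int q = of_int P"
    using tr unfolding q_def P_def by (simp add: algebra_simps)
  have uq': "u*u = of_int s * u + of_int t" using uq unfolding s_def t_def by simp
  have "(of_int (P*P) :: complex) = (u * of_int q) * (u * of_int q)" using uP by simp
  also have "\<dots> = (u*u) * (of_int q * of_int q)" by (simp add: algebra_simps)
  also have "\<dots> = (of_int s * u + of_int t) * (of_int q * of_int q)" using uq' by simp
  also have "\<dots> = of_int s * (u * of_int q) * of_int q + of_int t * of_int q * of_int q" by (simp add: algebra_simps)
  also have "\<dots> = of_int (s*P*q + t*q*q)" using uP by simp
  finally have "P*P = s*P*q + t*q*q" by (simp only: of_int_eq_iff)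
  then have "q dvd P" using ratint q0 by blast
  then obtain r where r: "P = q * r" by (auto elim: dvdE)
  have "of_int q * u = of_int q * (of_int r :: complex)" using uP r by (simp add: mult.commute)
  then have ur: "u = of_int r" using q0 by simp
  have "(of_int (r*r) :: complex) = of_int ((int lam - int mu)*r + (int k - int mu))"
    using uq ur by simp
  then have i1: "r*r = (int lam - int mu)*r + (int k - int mu)" by (simp only: of_int_eq_iff)
  have "(of_int (int f * r + int c * ((int lam - int mu) - r)) :: complex) = of_int (- int k)"
    using tr ur by simp
  then have i2: "int f * r + int c * ((int lam - int mu) - r) = - int k" by (simp only: of_int_eq_iff)
  have "int (k*k) = int (k + k*lam + (70-k)*mu)" using id by simp
  then have i3: "int k * int k = int k + int k * int lam + (70 - int k) * int mu" using k by (simp add: of_nat_diff)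
  show False
    by (rule int_contra[OF p _ _ _ _ _ _ _ _ _ i3 i1 i2]) (use k lm fc in auto)
qed


lemma quad_root:
  fixes a b c :: complex
  assumes a: "a \<noteq> 0"
  shows "\<exists>x. a*x*x + b*x + c = 0"
proof -
  define d where "d = csqrt (b*b - 4*a*c)"
  have d2: "d*d = b*b - 4*a*c" unfolding d_def by (metis power2_csqrt power2_eq_square)
  define x where "x = (-b + d) / (2*a)"
  have "a*x*x + b*x + c = (d*d - b*b + 4*a*c) / (4*a)"
    unfolding x_def using a by (simp add: field_simps)
  also have "\<dots> = 0" using d2 by simp
  finally show ?thesis by blast
qed

lemma csum_count:
  assumes "finite X"
  shows "(\<Sum>z\<in>X. if P z then (1::complex) else 0) = of_nat (card {z\<in>X. P z})"
  using sum.inter_filter[OF assms, of "\<lambda>_. (1::complex)" P] by simp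

locale cfgs = cfg + assumes AtA: "converse A = A"
begin

lemma Asym: "(x,y) \<in> A \<Longrightarrow> (y,x) \<in> A"
  using AtA by (metis converse_iff)

lemma outA_sym: "{z. (z,y) \<in> A} = out_nbhd A y"
  using Asym by (auto simp: out_nbhd_def)

lemma cntA: assumes "(x,y) \<in> A" "(x',y') \<in> A"
  shows "card (out_nbhd A x \<inter> out_nbhd A y) = card (out_nbhd A x' \<inter> out_nbhd A y')"
  using cc_const[OF cc AR(1) AR(1) AR(1) assms] by (simp add: outA_sym)

lemma cntB: assumes "(x,y) \<in> B" "(x',y') \<in> B"
  shows "card (out_nbhd A x \<inter> out_nbhd A y) = card (out_nbhd A x' \<inter> out_nbhd A y')"
  using cc_const[OF cc AR(1) AR(1) BR(1) assms] by (simp add: outA_sym)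

lemma sym_false: "prime (71::int) \<Longrightarrow> False"
proof -
  assume p: "prime (71::int)"
  define k where "k = valency A"
  have k1: "1 \<le> k" using kA1 k_def by simp
  have k69: "k \<le> 69" using kAB kB1 k_def by simp
  have outk: "card (out_nbhd A x) = k" if "x \<in> X" for x using val_eq[OF cc fX AR that] k_def by simp
  have finO: "finite (out_nbhd A x)" for x using AR(2) finX by (auto simp: out_nbhd_def intro: finite_subset)
  obtain a1 a2 where a12: "(a1,a2) \<in> A" using cc_ne[OF cc AR(1)] by auto
  obtain b1 b2 where b12: "(b1,b2) \<in> B" using cc_ne[OF cc BR(1)] by auto
  define lam where "lam = card (out_nbhd A a1 \<inter> out_nbhd A a2)"
  define mu where "mu = card (out_nbhd A b1 \<inter> out_nbhd A b2)"
  have cnt: "card (out_nbhd A x \<inter> out_nbhd A y) = (if x = y then k else if (x,y) \<in> A then lam else mu)"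
    if "x \<in> X" "y \<in> X" for x y
  proof (cases "x = y")
    case True then show ?thesis using outk[OF that(1)] by simp
  next
    case False
    show ?thesis
    proof (cases "(x,y) \<in> A")
      case True then show ?thesis using cntA[OF True a12] False lam_def by simp
    next
      case F2: False
      then have "(x,y) \<in> B" using AorB that False by blast
      then show ?thesis using cntB[OF _ b12] False F2 mu_def by simp
    qed
  qed
  have a1X: "a1 \<in> X" using a12 AR(2) by auto
  have b1X: "b1 \<in> X" using b12 BR(2) by auto
  have lamk: "lam \<le> k" unfolding lam_def using card_mono[OF finO, of "out_nbhd A a1 \<inter> out_nbhd A a2" a1] outk[OF a1X] by auto
  have muk: "mu \<le> k" unfolding mu_def using card_mono[OF finO, of "out_nbhd A b1 \<inter> out_nbhd A b2" b1] outk[OF b1X] by auto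
  obtain x0 where x0: "x0 \<in> X" using cX by (metis card.empty ex_in_conv zero_neq_numeral)
  have ident: "k*k = k + k*lam + (70-k)*mu"
  proof -
    have "(\<Sum>y\<in>X. card {z\<in>X. (x0,z) \<in> A \<and> (z,y) \<in> A}) = (\<Sum>z\<in>X. card {y\<in>X. (x0,z) \<in> A \<and> (z,y) \<in> A})"
      by (rule dc[OF finX finX])
    moreover have "(\<Sum>z\<in>X. card {y\<in>X. (x0,z) \<in> A \<and> (z,y) \<in> A}) = (\<Sum>z\<in>X. if (x0,z) \<in> A then k else 0)"
    proof (rule sum.cong)
      fix z assume z: "z \<in> X"
      have "{y\<in>X. (x0,z) \<in> A \<and> (z,y) \<in> A} = (if (x0,z) \<in> A then out_nbhd A z else {})"
        using AR(2) by (auto simp: out_nbhd_def)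
      then show "card {y\<in>X. (x0,z) \<in> A \<and> (z,y) \<in> A} = (if (x0,z) \<in> A then k else 0)" using outk[OF z] by simp
    qed simp
    moreover have "(\<Sum>z\<in>X. if (x0,z) \<in> A then k else 0) = k * k"
    proof -
      have "(\<Sum>z\<in>X. if (x0,z) \<in> A then k else 0) = (\<Sum>z\<in>{z\<in>X. (x0,z) \<in> A}. k)"
        using sum.inter_filter[OF finX, of "\<lambda>_. k" "\<lambda>z. (x0,z) \<in> A"] by simp
      moreover have "{z\<in>X. (x0,z) \<in> A} = out_nbhd A x0" using AR(2) by (auto simp: out_nbhd_def)
      ultimately show ?thesis using outk[OF x0] by simp
    qed
    moreover have "(\<Sum>y\<in>X. card {z\<in>X. (x0,z) \<in> A \<and> (z,y) \<in> A}) = (\<Sum>y\<in>X. if y = x0 then k else if (x0,y) \<in> A then lam else mu)"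
    proof (rule sum.cong)
      fix y assume y: "y \<in> X"
      have "{z\<in>X. (x0,z) \<in> A \<and> (z,y) \<in> A} = out_nbhd A x0 \<inter> out_nbhd A y"
        using AR(2) Asym by (auto simp: out_nbhd_def)
      then show "card {z\<in>X. (x0,z) \<in> A \<and> (z,y) \<in> A} = (if y = x0 then k else if (x0,y) \<in> A then lam else mu)"
        using cnt[OF x0 y] by auto
    qed simp
    moreover have "(\<Sum>y\<in>X. if y = x0 then k else if (x0,y) \<in> A then lam else mu) = k + k*lam + (70-k)*mu"
    proof -
      have fX0: "finite (X - {x0})" using finX by simp
      have "(\<Sum>y\<in>X. if y = x0 then k else if (x0,y) \<in> A then lam else mu)
          = (if x0 = x0 then k else if (x0,x0) \<in> A then lam else mu) + (\<Sum>y\<in>X - {x0}. if y = x0 then k else if (x0,y) \<in> A then lam else mu)"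
        by (rule sum.remove[OF finX x0])
      also have "(\<Sum>y\<in>X - {x0}. if y = x0 then k else if (x0,y) \<in> A then lam else mu) = (\<Sum>y\<in>X - {x0}. if (x0,y) \<in> A then lam else mu)"
        by (rule sum.cong) auto
      also have "\<dots> = (\<Sum>y\<in>(X - {x0}) \<inter> {y. (x0,y) \<in> A}. lam) + (\<Sum>y\<in>(X - {x0}) \<inter> - {y. (x0,y) \<in> A}. mu)"
        by (rule sum.If_cases[OF fX0])
      also have "(\<Sum>y\<in>(X - {x0}) \<inter> {y. (x0,y) \<in> A}. lam) + (\<Sum>y\<in>(X - {x0}) \<inter> - {y. (x0,y) \<in> A}. mu) = lam * k + mu * (70 - k)"
      proof -
        have e1: "(X - {x0}) \<inter> {y. (x0,y) \<in> A} = out_nbhd A x0" using AR(2) Airr by (auto simp: out_nbhd_def)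
        have e2: "(X - {x0}) \<inter> - {y. (x0,y) \<in> A} = (X - {x0}) - out_nbhd A x0" by (auto simp: out_nbhd_def)
        have "out_nbhd A x0 \<subseteq> X - {x0}" using AR(2) Airr by (auto simp: out_nbhd_def)
        then have "card ((X - {x0}) - out_nbhd A x0) = card (X - {x0}) - card (out_nbhd A x0)"
          by (rule card_Diff_subset[OF finO])
        then have cd: "card ((X - {x0}) - out_nbhd A x0) = 70 - k" using outk[OF x0] cX x0 finX by simp
        show ?thesis unfolding e1 e2 using cd outk[OF x0] by simp
      qed
      finally show ?thesis using outk[OF x0] by (simp add: mult.commute)
    qed
    ultimately show ?thesis by simp
  qed
  obtain e :: "nat \<Rightarrow> 'a" where bij: "bij_betw e {0..<(71::nat)} X" using ex_bij_betw_nat_finite[OF finX] cX by metis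
  have eX: "e i \<in> X" if "i < 71" for i using bij that by (auto simp: bij_betw_def)
  have einj: "e i = e j \<Longrightarrow> i < 71 \<Longrightarrow> j < 71 \<Longrightarrow> i = j" for i j
    using bij by (auto simp: bij_betw_def inj_on_def)
  have reidx: "(\<Sum>l\<in>{0..<(71::nat)}. g (e l)) = (\<Sum>z\<in>X. g z)" for g :: "'a \<Rightarrow> complex"
    by (rule sum.reindex_bij_betw[OF bij])
  define K :: complex where "K = of_nat k"
  define L :: complex where "L = of_nat lam"
  define M :: complex where "M = of_nat mu"
  define s where "s = L - M"
  define t where "t = K - M"
  obtain \<beta> :: complex where hb: "71*\<beta>*\<beta> + (2*K - s)*\<beta> + M = 0" using quad_root[of 71 "2*K - s" M] by auto
  define ind where "ind i j = (if (e i, e j) \<in> A then 1 else 0 :: complex)" for i j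
  define N where "N = mat 71 71 (\<lambda>(i,j). ind i j + \<beta>)"
  have Nc: "N \<in> carrier_mat 71 71" unfolding N_def by simp
  have rowsum: "(\<Sum>l\<in>{0..<71}. ind i l) = K" if "i < 71" for i
  proof -
    have "(\<Sum>l\<in>{0..<71}. ind i l) = (\<Sum>z\<in>X. if (e i, z) \<in> A then 1 else 0)"
      unfolding ind_def by (rule reidx)
    also have "\<dots> = of_nat (card {z\<in>X. (e i, z) \<in> A})" by (rule csum_count[OF finX])
    also have "{z\<in>X. (e i, z) \<in> A} = out_nbhd A (e i)" using AR(2) by (auto simp: out_nbhd_def)
    finally show ?thesis using outk[OF eX[OF that]] K_def by simp
  qed
  have colsum: "(\<Sum>l\<in>{0..<71}. ind l j) = K" if "j < 71" for j
  proof -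
    have "(\<Sum>l\<in>{0..<71}. ind l j) = (\<Sum>z\<in>X. if (z, e j) \<in> A then 1 else 0)"
      unfolding ind_def by (rule reidx)
    also have "\<dots> = of_nat (card {z\<in>X. (z, e j) \<in> A})" by (rule csum_count[OF finX])
    also have "{z\<in>X. (z, e j) \<in> A} = out_nbhd A (e j)" using AR(2) Asym by (auto simp: out_nbhd_def)
    finally show ?thesis using outk[OF eX[OF that]] K_def by simp
  qed
  have prodsum: "(\<Sum>l\<in>{0..<71}. ind i l * ind l j) = of_nat (card (out_nbhd A (e i) \<inter> out_nbhd A (e j)))"
    if "i < 71" "j < 71" for i j
  proof -
    have "(\<Sum>l\<in>{0..<71}. ind i l * ind l j) = (\<Sum>l\<in>{0..<(71::nat)}. (\<lambda>z. if (e i, z) \<in> A \<and> (z, e j) \<in> A then 1 else (0::complex)) (e l))"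
      by (rule sum.cong) (auto simp: ind_def)
    also have "\<dots> = (\<Sum>z\<in>X. if (e i, z) \<in> A \<and> (z, e j) \<in> A then 1 else 0)" by (rule reidx)
    also have "\<dots> = of_nat (card {z\<in>X. (e i, z) \<in> A \<and> (z, e j) \<in> A})" by (rule csum_count[OF finX])
    also have "{z\<in>X. (e i, z) \<in> A \<and> (z, e j) \<in> A} = out_nbhd A (e i) \<inter> out_nbhd A (e j)"
      using AR(2) Asym by (auto simp: out_nbhd_def)
    finally show ?thesis .
  qed
  have hb': "71*\<beta>*\<beta> + 2*K*\<beta> + M = s*\<beta>" using hb by (simp add: algebra_simps)
  have hbx: "2*K*\<beta> + 71*\<beta>*\<beta> = s*\<beta> - M"
  proof -
    have "2*K*\<beta> + 71*\<beta>*\<beta> = (71*\<beta>*\<beta> + 2*K*\<beta> + M) - M" by (simp add: algebra_simps)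
    also have "\<dots> = s*\<beta> - M" using hb' by simp
    finally show ?thesis .
  qed
  have NN: "N * N = s \<cdot>\<^sub>m N + t \<cdot>\<^sub>m 1\<^sub>m 71"
  proof (rule eq_matI)
    fix i j assume i: "i < dim_row (s \<cdot>\<^sub>m N + t \<cdot>\<^sub>m 1\<^sub>m 71)" and j: "j < dim_col (s \<cdot>\<^sub>m N + t \<cdot>\<^sub>m 1\<^sub>m 71)"
    then have i71: "i < 71" and j71: "j < 71" using Nc by auto
    have "(N * N) $$ (i,j) = (\<Sum>l\<in>{0..<71}. (ind i l + \<beta>) * (ind l j + \<beta>))"
      using i71 j71 unfolding N_def by (simp add: scalar_prod_def)
    also have "\<dots> = (\<Sum>l\<in>{0..<71}. ind i l * ind l j) + \<beta> * (\<Sum>l\<in>{0..<71}. ind i l) + \<beta> * (\<Sum>l\<in>{0..<71}. ind l j) + 71*\<beta>*\<beta>"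
      by (simp add: algebra_simps sum.distrib sum_distrib_left)
    also have "\<dots> = of_nat (card (out_nbhd A (e i) \<inter> out_nbhd A (e j))) + 2*K*\<beta> + 71*\<beta>*\<beta>"
      using prodsum[OF i71 j71] rowsum[OF i71] colsum[OF j71] by (simp add: algebra_simps)
    also have "\<dots> = of_nat (card (out_nbhd A (e i) \<inter> out_nbhd A (e j))) + (s*\<beta> - M)"
      using hbx by (metis add.assoc)
    also have "\<dots> = (s \<cdot>\<^sub>m N + t \<cdot>\<^sub>m 1\<^sub>m 71) $$ (i,j)"
    proof -
      have rhs: "(s \<cdot>\<^sub>m N + t \<cdot>\<^sub>m 1\<^sub>m 71) $$ (i,j) = s * (ind i j + \<beta>) + t * (if i = j then 1 else 0)"
        using i71 j71 unfolding N_def by simp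
      show ?thesis
      proof (cases "i = j")
        case True
        then have "ind i j = 0" using Airr unfolding ind_def by auto
        then show ?thesis unfolding rhs using True cnt[OF eX[OF i71] eX[OF j71]] K_def t_def
          by (simp add: algebra_simps)
      next
        case False
        then have ne: "e i \<noteq> e j" using einj i71 j71 by blast
        show ?thesis
        proof (cases "(e i, e j) \<in> A")
          case True
          then have "ind i j = 1" unfolding ind_def by simp
          then show ?thesis unfolding rhs using True False ne cnt[OF eX[OF i71] eX[OF j71]] L_def M_def s_def
            by (simp add: algebra_simps)
        next
          case F2: False
          then have "ind i j = 0" unfolding ind_def by simp
          then show ?thesis unfolding rhs using F2 False ne cnt[OF eX[OF i71] eX[OF j71]] M_def
            by (simp add: algebra_simps)
        qed
      qed
    qed
    finally show "(N * N) $$ (i,j) = (s \<cdot>\<^sub>m N + t \<cdot>\<^sub>m 1\<^sub>m 71) $$ (i,j)" .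
  next
    show "dim_row (N * N) = dim_row (s \<cdot>\<^sub>m N + t \<cdot>\<^sub>m 1\<^sub>m 71)" using Nc by simp
    show "dim_col (N * N) = dim_col (s \<cdot>\<^sub>m N + t \<cdot>\<^sub>m 1\<^sub>m 71)" using Nc by simp
  qed
  define w :: "complex vec" where "w = vec 71 (\<lambda>_. 1)"
  define u where "u = K + 71*\<beta>"
  have wc: "w \<in> carrier_vec 71" unfolding w_def by simp
  have w0: "w \<noteq> 0\<^sub>v 71"
  proof
    assume "w = 0\<^sub>v 71"
    then have "w $ 0 = (0\<^sub>v 71 :: complex vec) $ 0" by simp
    then show False unfolding w_def by simp
  qed
  have Nw: "N *\<^sub>v w = u \<cdot>\<^sub>v w"
  proof (rule eq_vecI)
    fix i assume "i < dim_vec (u \<cdot>\<^sub>v w)"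
    then have i: "i < 71" unfolding w_def by simp
    have "(N *\<^sub>v w) $ i = (\<Sum>l\<in>{0..<71}. ind i l + \<beta>)"
      using i unfolding N_def w_def by (simp add: scalar_prod_def)
    also have "\<dots> = K + 71*\<beta>" using rowsum[OF i] by (simp add: sum.distrib)
    finally show "(N *\<^sub>v w) $ i = (u \<cdot>\<^sub>v w) $ i" using i unfolding u_def w_def by simp
  qed (simp add: N_def w_def)
  have identC: "K*K = K + K*L + (70 - K)*M"
  proof -
    have "(of_nat (k*k) :: complex) = of_nat (k + k*lam + (70-k)*mu)" using ident by simp
    then show ?thesis unfolding K_def L_def M_def using k69 by (simp add: of_nat_diff)
  qed
  have "u*u - (s*u + t) = (K*K - (K + K*L + (70 - K)*M)) + 71*(71*\<beta>*\<beta> + (2*K - s)*\<beta> + M)"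
    unfolding u_def s_def t_def by (simp add: algebra_simps)
  then have uq: "u*u = s*u + t" using identC hb by simp
  obtain b where b: "1 \<le> b" "b \<le> 71" "(\<Sum>i<71. N$$(i,i)) = of_nat b * u + of_nat (71 - b) * (s - u)"
    using spec[OF Nc NN wc w0 Nw uq] by blast
  have "(\<Sum>i<71. N$$(i,i)) = (\<Sum>i<(71::nat). \<beta>)"
  proof (rule sum.cong)
    fix i assume "i \<in> {..<(71::nat)}"
    then have i: "i < 71" by simp
    have "ind i i = 0" using Airr unfolding ind_def by auto
    then show "N$$(i,i) = \<beta>" using i unfolding N_def by simp
  qed simp
  then have tr71: "of_nat b * u + of_nat (71 - b) * (s - u) = 71*\<beta>" using b(3) by simp
  define f where "f = b - 1"
  define c where "c = 71 - b"
  have fc: "f + c = 70" using b unfolding f_def c_def by simp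
  have "of_nat f * u + of_nat c * (s - u) = - K"
  proof -
    have bf: "b = f + 1" unfolding f_def using b(1) by simp
    have "of_nat f * u + of_nat c * (s - u) = (of_nat b * u + of_nat c * (s - u)) - u" using bf by (simp add: algebra_simps)
    also have "\<dots> = 71*\<beta> - u" using tr71 unfolding c_def by simp
    also have "\<dots> = - K" unfolding u_def by simp
    finally show ?thesis .
  qed
  then have trk: "of_nat f * u + of_nat c * ((of_nat lam - of_nat mu) - u) = - of_nat k"
    unfolding s_def L_def M_def K_def .
  have uq2: "u*u = (of_nat lam - of_nat mu)*u + (of_nat k - of_nat mu)"
    using uq unfolding s_def t_def L_def M_def K_def .
  show False by (rule complex_contra[OF p k1 k69 lamk muk fc ident uq2 trk])
qed

end


theorem lemma4p5:
  fixes V :: "'a set" and \<R> :: "('a \<times> 'a) set set" and X Y :: "'a set"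
    and m r k :: nat
  assumes cc: "coherent_configuration V \<R>"
    and fX: "fiber \<R> X" and fY: "fiber \<R> Y"
    and m_def: "m = card X" and mY: "card Y = m" and m_prime: "prime m"
    and r_def: "r = card (rels_between \<R> X X)" and r_gt: "r > 2"
    and XY_gt: "card (rels_between \<R> X Y) > 1"
    and k_def: "real k = (real m - 1) / (real r - 1)"
    and km: "(k, m) = (35, 71)"
    and no1: "1 \<notin> valency ` rels_between \<R> X Y"
  shows "valency ` rels_between \<R> X Y = {15, 21, 35}"
proof -
  have k35: "k = 35" and m71: "m = 71" using km by auto
  have rpos: "real r - 1 > 0" using r_gt by simp
  have "35 = 70 / (real r - 1)" using k_def k35 m71 by simp
  then have "35 * (real r - 1) = 70" using rpos by (simp add: field_simps)
  then have "real r = 3" by simp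
  then have r3: "r = 3" by simp
  have cX: "card X = 71" using m_def m71 by simp
  have cY: "card Y = 71" using mY m71 by simp
  have p: "prime (71::int)" using m_prime m71 by simp
  have Iin: "Id_on X \<in> rels_between \<R> X X" using fX by (auto simp: fiber_def rels_between_def)
  have fin: "finite (rels_between \<R> X X)" by (rule rb_finite[OF cc])
  have "card (rels_between \<R> X X - {Id_on X}) = 2" using r3 r_def Iin fin by simp
  then obtain A B where AB: "rels_between \<R> X X - {Id_on X} = {A, B}" "A \<noteq> B" by (auto simp: card_2_iff)
  have RX: "rels_between \<R> X X = {Id_on X, A, B}" using AB(1) Iin by blast
  have AI: "A \<noteq> Id_on X" and BI: "B \<noteq> Id_on X" using AB(1) by auto
  interpret cfg V \<R> X Y A B
    by (unfold_locales) (use cc fX fY cX cY RX AB(2) AI BI in auto)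
  show ?thesis
  proof (cases "converse A = A")
    case True
    interpret cfgs V \<R> X Y A B by (unfold_locales) (rule True)
    show ?thesis using sym_false[OF p] by simp
  next
    case False
    then have "converse A = B" using convA by simp
    then interpret cfgn V \<R> X Y A B by (unfold_locales)
    show ?thesis by (rule nonsym_result[OF XY_gt no1])
  qed
qed

end
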